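(* Let $\pi(\vec{x},y)$ be a Skolem constraint (a finite conjunction of linear arithmetic literals, as defined in the context) and let $\mathit{sk}(\vec{x})$ be the term returned by the procedure $\textsc{ExtractSk}(\vec{x},y,\pi)$ described in the context. Assume that the uninterpreted function $f_{\textsc{rng}}$ occurring in $\mathit{sk}$ is interpreted so that postconditions (P1)–(P5) of the context hold. Then $\mathit{sk}$ is a valid Skolem term for $\pi$: for every valuation of $\vec{x}$ such that $\exists y.\,\pi(\vec{x},y)$ holds, $\pi(\vec{x},\mathit{sk}(\vec{x}))$ holds.
   Context: Work in linear integer arithmetic or linear real arithmetic, with universally quantified variables $\vec{x}$ and a single existentially quantified variable $y$ of sort $T\in\{\mathbb{Z},\mathbb{R}\}$. A Skolem constraint is a conjunction $\pi(\vec{x},y)=\bigwedge_{r\in E\cup D\cup G\cup GE\cup L\cup LE} r(\vec{x},y)$ of literals, each normalized to one of the forms $E=\{y=f_i(\vec{x})\}$, $D=\{y\neq f_i(\vec{x})\}$, $G=\{y>f_i(\vec{x})\}$, $GE=\{y\ge f_i(\vec{x})\}$, $L=\{y<f_i(\vec{x})\}$, $LE=\{y\le f_i(\vec{x})\}$ with $f_i$ linear terms over $\vec{x}$ (over the integers, $A<B$ is rewritten as $A\le B-1$ and $A\ge B$ as $A>B-1$). A term $\mathit{sk}(\vec{x})$ is a valid Skolem term for $\pi$ if $\pi(\vec{x},\mathit{sk}(\vec{x}))$ holds for every $\vec{x}$ with $\exists y.\pi(\vec{x},y)$. Helpers: $\textsc{ASN}(y\sim e(\vec{x}))=e$; $\textsc{MIN}(\{s\})=\textsc{MAX}(\{s\})=\textsc{ASN}(s)$;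 $\textsc{MIN}(S)=\mathit{ite}(\textsc{ASN}(s)\le \textsc{MIN}(S\setminus\{s\}),\textsc{ASN}(s),\textsc{MIN}(S\setminus\{s\}))$ and $\textsc{MAX}(S)=\mathit{ite}(\textsc{ASN}(s)\ge \textsc{MAX}(S\setminus\{s\}),\textsc{ASN}(s),\textsc{MAX}(S\setminus\{s\}))$ for $s\in S$ (symbolic min/max). Uninterpreted random number generator: $f_{\textsc{rng}}(H,\ell_c,u_c,\ell,u)$ takes a collection $H$ of terms, two booleans $\ell_c,u_c$ and two bounds, returning a value of sort $T$; its interpretation must satisfy: (P1) $f_{\textsc{rng}}(H,\cdot)\neq h$ for all $h\in H$; (P2) $f_{\textsc{rng}}(H,\bot,\bot,\ell,u)\in(\ell,u)$; (P3) $f_{\textsc{rng}}(H,\bot,\top,\ell,u)\in(\ell,u]$; (P4) $f_{\textsc{rng}}(H,\top,\bot,\ell,u)\in[\ell,u)$; (P5) $f_{\textsc{rng}}(H,\top,\top,\ell,u)\in[\ell,u]$. Here $-\infty,+\infty$ denote unconstrained bounds. Procedure $\textsc{ExtractSk}(\vec{x},y,\pi)$: set $\ell_{closed}=u_{closed}=\bot$ and $\ell,u$ undefined. If $E\neq\varnothing$, return $\textsc{ASN}(e)$ for some $e\in E$. If $G\cup GE\neq\varnothing$: $\ell:=\textsc{MAX}(G\cup GE)$, $\ell_{closed}:=(G=\varnothing\lor \textsc{MAX}(G)<\textsc{MAX}(GE))$. If $L\cup LE\neq\varnothing$: $u:=\textsc{MIN}(L\cup LE)$, $u_{closed}:=(L=\varnothing\lor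 \textsc{MIN}(L)>\textsc{MIN}(LE))$. If $\ell(\vec{x})=u(\vec{x})$, return $\ell$. Let $H=\{\textsc{ASN}(d)\mid d\in D\}$. If both $\ell,u$ undefined return $f_{\textsc{rng}}(H,\top,\top,-\infty,+\infty)$; if only $\ell$ undefined return $f_{\textsc{rng}}(H,\top,u_{closed},-\infty,u)$; if only $u$ undefined return $f_{\textsc{rng}}(H,\ell_{closed},\top,\ell,+\infty)$; otherwise return $f_{\textsc{rng}}(H,\ell_{closed},u_{closed},\ell,u)$. *)

theory Defs
  imports Main
begin

datatype rel = REq | RNeq | RGt | RGe | RLt | RLe

text \<open>A linear term over the universally quantified variables x_0, x_1, ...:
  a pair (c, [a_0, ..., a_(k-1)]) denoting c + a_0 x_0 + ... + a_(k-1) x_(k-1).\<close>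
type_synonym 'a lin_term = "'a \<times> 'a list"

definition eval_lt :: "'a::linordered_idom lin_term \<Rightarrow> (nat \<Rightarrow> 'a) \<Rightarrow> 'a" where
  "eval_lt t x = fst t + (\<Sum>i<length (snd t). snd t ! i * x i)"

text \<open>A literal (r, f) stands for  y r f(x).\<close>
type_synonym 'a literal = "rel \<times> 'a lin_term"

fun holds_rel :: "rel \<Rightarrow> 'a::linordered_idom \<Rightarrow> 'a \<Rightarrow> bool" where
  "holds_rel REq y v = (y = v)"
| "holds_rel RNeq y v = (y \<noteq> v)"
| "holds_rel RGt y v = (y > v)"
| "holds_rel RGe y v = (y \<ge> v)"
| "holds_rel RLt y v = (y < v)"
| "holds_rel RLe y v = (y \<le> v)"

definition holds_lit :: "'a::linordered_idom literal \<Rightarrow> (nat \<Rightarrow> 'a) \<Rightarrow> 'a \<Rightarrow> bool" where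
  "holds_lit l x y = holds_rel (fst l) y (eval_lt (snd l) x)"

definition sat :: "'a::linordered_idom literal list \<Rightarrow> (nat \<Rightarrow> 'a) \<Rightarrow> 'a \<Rightarrow> bool" where
  "sat \<pi> x y = (\<forall>l\<in>set \<pi>. holds_lit l x y)"

definition valid_skolem :: "'a::linordered_idom literal list \<Rightarrow> ((nat \<Rightarrow> 'a) \<Rightarrow> 'a) \<Rightarrow> bool" where
  "valid_skolem \<pi> sk = (\<forall>x. (\<exists>y. sat \<pi> x y) \<longrightarrow> sat \<pi> x (sk x))"

definition ASN :: "'a::linordered_idom literal \<Rightarrow> (nat \<Rightarrow> 'a) \<Rightarrow> 'a" where
  "ASN l x = eval_lt (snd l) x"

fun MAXv :: "'a::linordered_idom literal list \<Rightarrow> (nat \<Rightarrow> 'a) \<Rightarrow> 'a" where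
  "MAXv [] x = undefined"
| "MAXv [s] x = ASN s x"
| "MAXv (s # S) x = (if ASN s x \<ge> MAXv S x then ASN s x else MAXv S x)"

fun MINv :: "'a::linordered_idom literal list \<Rightarrow> (nat \<Rightarrow> 'a) \<Rightarrow> 'a" where
  "MINv [] x = undefined"
| "MINv [s] x = ASN s x"
| "MINv (s # S) x = (if ASN s x \<le> MINv S x then ASN s x else MINv S x)"

datatype 'a ext = MInf | PInf | Fin 'a

fun above :: "bool \<Rightarrow> 'a::linorder ext \<Rightarrow> 'a \<Rightarrow> bool" where
  "above c MInf v = True"
| "above c PInf v = False"
| "above c (Fin a) v = (if c then a \<le> v else a < v)"

fun below :: "bool \<Rightarrow> 'a::linorder ext \<Rightarrow> 'a \<Rightarrow> bool" where
  "below c PInf v = True"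
| "below c MInf v = False"
| "below c (Fin b) v = (if c then v \<le> b else v < b)"

text \<open>Postconditions (P1)-(P5) for a given call f_rng(H, lc, uc, l, u) with result v:
  v is not in H, and v lies in the interval (l,u), (l,u], [l,u) or [l,u] according to the
  flags lc, uc (infinite bounds are unconstrained).\<close>
definition rng_post :: "'a::linorder list \<Rightarrow> bool \<Rightarrow> bool \<Rightarrow> 'a ext \<Rightarrow> 'a ext \<Rightarrow> 'a \<Rightarrow> bool" where
  "rng_post H lc uc l u v = (v \<notin> set H \<and> above lc l v \<and> below uc u v)"

text \<open>Interpretation of the uninterpreted f_rng: it satisfies (P1)-(P5) for every call
  for which the postconditions are satisfiable at all.\<close>
definition rng_spec :: "('a::linorder list \<Rightarrow> bool \<Rightarrow> bool \<Rightarrow> 'a ext \<Rightarrow> 'a ext \<Rightarrow> 'a) \<Rightarrow> bool" where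
  "rng_spec f = (\<forall>H lc uc l u. (\<exists>v. rng_post H lc uc l u v) \<longrightarrow> rng_post H lc uc l u (f H lc uc l u))"

definition extract_sk ::
  "('a::linordered_idom list \<Rightarrow> bool \<Rightarrow> bool \<Rightarrow> 'a ext \<Rightarrow> 'a ext \<Rightarrow> 'a)
   \<Rightarrow> 'a literal list \<Rightarrow> (nat \<Rightarrow> 'a) \<Rightarrow> 'a" where
  "extract_sk frng \<pi> x =
    (let E = filter (\<lambda>l. fst l = REq) \<pi>;
         D = filter (\<lambda>l. fst l = RNeq) \<pi>;
         G = filter (\<lambda>l. fst l = RGt) \<pi>;
         GE = filter (\<lambda>l. fst l = RGe) \<pi>;
         L = filter (\<lambda>l. fst l = RLt) \<pi>;
         LE = filter (\<lambda>l. fst l = RLe) \<pi>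
     in if E \<noteq> [] then ASN (hd E) x
        else
          let hasl = (G @ GE \<noteq> []);
              hasu = (L @ LE \<noteq> []);
              l = MAXv (G @ GE) x;
              lc = (G = [] \<or> (GE \<noteq> [] \<and> MAXv G x < MAXv GE x));
              u = MINv (L @ LE) x;
              uc = (L = [] \<or> (LE \<noteq> [] \<and> MINv L x > MINv LE x));
              H = map (\<lambda>d. ASN d x) D
          in if hasl \<and> hasu \<and> l = u then l
             else if \<not> hasl \<and> \<not> hasu then frng H True True MInf PInf
             else if \<not> hasl then frng H True uc MInf (Fin u)
             else if \<not> hasu then frng H lc True (Fin l) PInf
             else frng H lc uc (Fin l) (Fin u))"

end

theory Submission
  imports Defs
begin

lemma MAXv_props: fixes S :: "'a::linordered_idom literal list" shows "S \<noteq> [] \<Longrightarrow> (\<forall>s\<in>set S. ASN s x \<le> MAXv S x) \<and> (\<exists>s\<in>set S. ASN s x = MAXv S x)"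
proof (induction S)
  case (Cons s S)
  then show ?case by (cases S) (auto intro: order_trans)
qed auto

lemma MINv_props: fixes S :: "'a::linordered_idom literal list" shows "S \<noteq> [] \<Longrightarrow> (\<forall>s\<in>set S. MINv S x \<le> ASN s x) \<and> (\<exists>s\<in>set S. ASN s x = MINv S x)"
proof (induction S)
  case (Cons s S)
  then show ?case by (cases S) (auto intro: order_trans)
qed auto

lemma max_lt: "S \<noteq> [] \<Longrightarrow> (\<forall>s\<in>set S. ASN s x < y) \<longleftrightarrow> MAXv S x < y"
  using MAXv_props[of S x] by (metis order_le_less_trans)
lemma max_le: "S \<noteq> [] \<Longrightarrow> (\<forall>s\<in>set S. ASN s x \<le> y) \<longleftrightarrow> MAXv S x \<le> y"
  using MAXv_props[of S x] by (metis order_trans)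
lemma min_lt: "S \<noteq> [] \<Longrightarrow> (\<forall>s\<in>set S. y < ASN s x) \<longleftrightarrow> y < MINv S x"
  using MINv_props[of S x] by (metis order_less_le_trans)
lemma min_le: "S \<noteq> [] \<Longrightarrow> (\<forall>s\<in>set S. y \<le> ASN s x) \<longleftrightarrow> y \<le> MINv S x"
  using MINv_props[of S x] by (metis order_trans)

lemma lower_ok:
  fixes G GE :: "'a::linordered_idom literal list"
  assumes "G @ GE \<noteq> []"
  shows "above (G = [] \<or> (GE \<noteq> [] \<and> MAXv G x < MAXv GE x)) (Fin (MAXv (G @ GE) x)) y
     \<longleftrightarrow> (\<forall>g\<in>set G. ASN g x < y) \<and> (\<forall>g\<in>set GE. ASN g x \<le> y)"
proof (cases "G = []")
  case True
  then show ?thesis using assms max_le[of GE x y] by simp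
next
  case G: False
  show ?thesis
  proof (cases "GE = []")
    case True
    then show ?thesis using G max_lt[of G x y] by simp
  next
    case GE: False
    have k: "MAXv (G @ GE) x \<le> z \<longleftrightarrow> max (MAXv G x) (MAXv GE x) \<le> z" for z
      using max_le[of "G @ GE" x z] max_le[of G x z] max_le[of GE x z] G GE by auto
    have m: "MAXv (G @ GE) x = max (MAXv G x) (MAXv GE x)"
      using k[of "MAXv (G @ GE) x"] k[of "max (MAXv G x) (MAXv GE x)"] by (simp add: antisym)
    show ?thesis using G GE max_lt[of G x y] max_le[of GE x y] by (auto simp: m max_def)
  qed
qed

lemma upper_ok:
  fixes L LE :: "'a::linordered_idom literal list" and x :: "nat \<Rightarrow> 'a" and y :: 'a
  assumes "L @ LE \<noteq> []"
  shows "below (L = [] \<or> (LE \<noteq> [] \<and> MINv L x > MINv LE x)) (Fin (MINv (L @ LE) x)) y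
     \<longleftrightarrow> (\<forall>g\<in>set L. y < ASN g x) \<and> (\<forall>g\<in>set LE. y \<le> ASN g x)"
proof (cases "L = []")
  case True
  then show ?thesis using assms min_le[of LE y x] by simp
next
  case G: False
  show ?thesis
  proof (cases "LE = []")
    case True
    then show ?thesis using G min_lt[of L y x] by simp
  next
    case GE: False
    have k: "z \<le> MINv (L @ LE) x \<longleftrightarrow> z \<le> min (MINv L x) (MINv LE x)" for z
      using min_le[of "L @ LE" z x] min_le[of L z x] min_le[of LE z x] G GE by auto
    have m: "MINv (L @ LE) x = min (MINv L x) (MINv LE x)"
      using k[of "MINv (L @ LE) x"] k[of "min (MINv L x) (MINv LE x)"] by (simp add: antisym)
    show ?thesis using G GE min_lt[of L y x] min_le[of LE y x] by (auto simp: m min_def)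
  qed
qed

lemma ball_filter: "(\<forall>d\<in>set (filter P xs). Q d) = (\<forall>d\<in>set xs. P d \<longrightarrow> Q d)"
  by auto

lemma sat_split:
  assumes "filter (\<lambda>l. fst l = REq) \<pi> = []"
  shows "sat \<pi> x v \<longleftrightarrow>
     (\<forall>d\<in>set (filter (\<lambda>l. fst l = RNeq) \<pi>). v \<noteq> ASN d x) \<and>
     (\<forall>g\<in>set (filter (\<lambda>l. fst l = RGt) \<pi>). ASN g x < v) \<and>
     (\<forall>g\<in>set (filter (\<lambda>l. fst l = RGe) \<pi>). ASN g x \<le> v) \<and>
     (\<forall>g\<in>set (filter (\<lambda>l. fst l = RLt) \<pi>). v < ASN g x) \<and>
     (\<forall>g\<in>set (filter (\<lambda>l. fst l = RLe) \<pi>). v \<le> ASN g x)"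
proof -
  have ne: "\<forall>l\<in>set \<pi>. fst l \<noteq> REq" using assms by (simp add: filter_empty_conv)
  have "sat \<pi> x v \<longleftrightarrow> (\<forall>l\<in>set \<pi>. (fst l = RNeq \<longrightarrow> v \<noteq> ASN l x) \<and>
      (fst l = RGt \<longrightarrow> ASN l x < v) \<and> (fst l = RGe \<longrightarrow> ASN l x \<le> v) \<and>
      (fst l = RLt \<longrightarrow> v < ASN l x) \<and> (fst l = RLe \<longrightarrow> v \<le> ASN l x))"
    unfolding sat_def
  proof (rule ball_cong[OF refl])
    fix l assume "l \<in> set \<pi>"
    then have "fst l \<noteq> REq" using ne by blast
    then show "holds_lit l x v \<longleftrightarrow> (fst l = RNeq \<longrightarrow> v \<noteq> ASN l x) \<and>
      (fst l = RGt \<longrightarrow> ASN l x < v) \<and> (fst l = RGe \<longrightarrow> ASN l x \<le> v) \<and>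
      (fst l = RLt \<longrightarrow> v < ASN l x) \<and> (fst l = RLe \<longrightarrow> v \<le> ASN l x)"
      unfolding holds_lit_def ASN_def by (cases "fst l") simp_all
  qed
  then show ?thesis by (simp only: ball_filter ball_conj_distrib)
qed

theorem mainTheorem1:
  fixes frng :: "'a::linordered_idom list \<Rightarrow> bool \<Rightarrow> bool \<Rightarrow> 'a ext \<Rightarrow> 'a ext \<Rightarrow> 'a"
    and \<pi> :: "'a literal list"
  assumes "rng_spec frng"
  shows "valid_skolem \<pi> (extract_sk frng \<pi>)"
  unfolding valid_skolem_def
proof (intro allI impI)
  fix x
  assume "\<exists>y. sat \<pi> x y"
  then obtain y where y: "sat \<pi> x y" by blast
  define E where "E = filter (\<lambda>l. fst l = REq) \<pi>"
  define D where "D = filter (\<lambda>l. fst l = RNeq) \<pi>"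
  define G where "G = filter (\<lambda>l. fst l = RGt) \<pi>"
  define GE where "GE = filter (\<lambda>l. fst l = RGe) \<pi>"
  define L where "L = filter (\<lambda>l. fst l = RLt) \<pi>"
  define LE where "LE = filter (\<lambda>l. fst l = RLe) \<pi>"
  show "sat \<pi> x (extract_sk frng \<pi> x)"
  proof (cases "E = []")
    case False
    then have "hd E \<in> set \<pi>" "fst (hd E) = REq" unfolding E_def
      using hd_in_set[OF False] unfolding E_def by auto
    then have "y = ASN (hd E) x" using y unfolding sat_def holds_lit_def ASN_def by force
    moreover have "extract_sk frng \<pi> x = ASN (hd E) x"
      using False unfolding extract_sk_def E_def Let_def by simp
    ultimately show ?thesis using y by simp
  next
    case E: True
    define hasl where "hasl = (G @ GE \<noteq> [])"
    define hasu where "hasu = (L @ LE \<noteq> [])"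
    define l where "l = MAXv (G @ GE) x"
    define lc where "lc = (G = [] \<or> (GE \<noteq> [] \<and> MAXv G x < MAXv GE x))"
    define u where "u = MINv (L @ LE) x"
    define uc where "uc = (L = [] \<or> (LE \<noteq> [] \<and> MINv L x > MINv LE x))"
    define H where "H = map (\<lambda>d. ASN d x) D"
    define lc' where "lc' = (if hasl then lc else True)"
    define uc' where "uc' = (if hasu then uc else True)"
    define lb where "lb = (if hasl then Fin l else MInf)"
    define ub where "ub = (if hasu then Fin u else PInf)"
    have sk0: "extract_sk frng \<pi> x = (if hasl \<and> hasu \<and> l = u then l
             else if \<not> hasl \<and> \<not> hasu then frng H True True MInf PInf
             else if \<not> hasl then frng H True uc MInf (Fin u)
             else if \<not> hasu then frng H lc True (Fin l) PInf
             else frng H lc uc (Fin l) (Fin u))"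
      using E unfolding extract_sk_def Let_def E_def[symmetric] D_def[symmetric] G_def[symmetric]
        GE_def[symmetric] L_def[symmetric] LE_def[symmetric]
      unfolding hasl_def hasu_def l_def lc_def u_def uc_def H_def by simp
    have sk: "extract_sk frng \<pi> x =
      (if hasl \<and> hasu \<and> l = u then l else frng H lc' uc' lb ub)"
      unfolding sk0 lc'_def uc'_def lb_def ub_def by simp
    have low: "above lc' lb v \<longleftrightarrow> (\<forall>g\<in>set G. ASN g x < v) \<and> (\<forall>g\<in>set GE. ASN g x \<le> v)" for v
    proof (cases hasl)
      case True
      then show ?thesis using lower_ok[of G GE x v] unfolding lc'_def lb_def l_def lc_def hasl_def
        by simp
    next
      case False
      then show ?thesis unfolding lc'_def lb_def hasl_def by simp
    qed
    have upp: "below uc' ub v \<longleftrightarrow> (\<forall>g\<in>set L. v < ASN g x) \<and> (\<forall>g\<in>set LE. v \<le> ASN g x)" for v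
    proof (cases hasu)
      case True
      then show ?thesis using upper_ok[of L LE x v] unfolding uc'_def ub_def u_def uc_def hasu_def
        by simp
    next
      case False
      then show ?thesis unfolding uc'_def ub_def hasu_def by simp
    qed
    have eqv: "sat \<pi> x v \<longleftrightarrow> rng_post H lc' uc' lb ub v" for v
    proof -
      have s: "sat \<pi> x v \<longleftrightarrow> (\<forall>d\<in>set D. v \<noteq> ASN d x) \<and>
          ((\<forall>g\<in>set G. ASN g x < v) \<and> (\<forall>g\<in>set GE. ASN g x \<le> v)) \<and>
          ((\<forall>g\<in>set L. v < ASN g x) \<and> (\<forall>g\<in>set LE. v \<le> ASN g x))"
        using sat_split[of \<pi> x v] E unfolding E_def D_def G_def GE_def L_def LE_def
        by (simp only: conj_assoc)
      have h: "v \<notin> set H \<longleftrightarrow> (\<forall>d\<in>set D. v \<noteq> ASN d x)"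
        unfolding H_def by auto
      show ?thesis unfolding s rng_post_def h low upp by (rule refl)
    qed
    have yp: "rng_post H lc' uc' lb ub y" using eqv[of y] y by (rule iffD1)
    show ?thesis
    proof (cases "hasl \<and> hasu \<and> l = u")
      case True
      have ab: "above lc' lb y" "below uc' ub y" using yp unfolding rng_post_def by simp_all
      have lbF: "lb = Fin l" "ub = Fin u" using True unfolding lb_def ub_def by simp_all
      have "l \<le> y" using ab(1) unfolding lbF by (cases lc') auto
      moreover have "y \<le> u" using ab(2) unfolding lbF by (cases uc') auto
      ultimately have yl: "y = l" using True by (metis antisym)
      have "extract_sk frng \<pi> x = l" unfolding sk using True by (rule if_P)
      then show ?thesis using y unfolding yl by (rule ssubst)
    next
      case False
      have ex: "\<exists>v. rng_post H lc' uc' lb ub v" using yp by (rule exI)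
      have "rng_post H lc' uc' lb ub (frng H lc' uc' lb ub)"
        by (rule assms[unfolded rng_spec_def, rule_format, OF ex])
      then have "sat \<pi> x (frng H lc' uc' lb ub)" by (rule eqv[THEN iffD2])
      then show ?thesis unfolding sk if_not_P[OF False] .
    qed
  qed
qed

end
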